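(* Let $P_1,Q_1\in GL(2,\mathbb R)$, where $P_1$ has the pair of complex conjugate eigenvalues $\cos\alpha\pm i\sin\alpha$ with $\alpha\in(-\pi/2,\pi/2]$ and $\alpha/\pi\notin\mathbb Q$. If $f\colon\overline{\mathbb R}\to\overline{\mathbb R}$ is a homeomorphism with $f(P_1(x))=Q_1(f(x))$ for all $x\in\overline{\mathbb R}$, then $f$ is a nondegenerate linear-fractional transformation, i.e. $f(x)=\frac{ax+b}{cx+d}$ for some real $a,b,c,d$ with $ad-bc\neq0$.
   Context: $\overline{\mathbb R}=\mathbb R\cup\{\infty\}$. A matrix $\begin{pmatrix}a&b\\c&d\end{pmatrix}\in GL(2,\mathbb R)$ acts on $\overline{\mathbb R}$ by $x\mapsto\frac{ax+b}{cx+d}$. *)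

theory Defs
  imports "HOL-Analysis.Analysis"
begin

datatype rbar = Fin real | Infty

definition rbar_open :: "rbar set \<Rightarrow> bool" where
  "rbar_open U \<longleftrightarrow> open {x. Fin x \<in> U} \<and>
     (Infty \<in> U \<longrightarrow> (\<exists>M. \<forall>x. \<bar>x\<bar> > M \<longrightarrow> Fin x \<in> U))"

lemma istopology_rbar_open: "istopology rbar_open"
  unfolding istopology_def
proof (intro conjI allI impI)
  fix S T :: "rbar set" assume S: "rbar_open S" and T: "rbar_open T"
  note ST = S T
  have "{x. Fin x \<in> S \<inter> T} = {x. Fin x \<in> S} \<inter> {x. Fin x \<in> T}" by auto
  then have o: "open {x. Fin x \<in> S \<inter> T}" using ST by (simp add: rbar_open_def open_Int)
  have "\<exists>M. \<forall>x. \<bar>x\<bar> > M \<longrightarrow> Fin x \<in> S \<inter> T" if inf: "Infty \<in> S \<inter> T"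
  proof -
    obtain M1 where "\<forall>x. \<bar>x\<bar> > M1 \<longrightarrow> Fin x \<in> S" using ST inf unfolding rbar_open_def by blast
    moreover obtain M2 where "\<forall>x. \<bar>x\<bar> > M2 \<longrightarrow> Fin x \<in> T" using ST inf unfolding rbar_open_def by blast
    ultimately have "\<forall>x. \<bar>x\<bar> > max M1 M2 \<longrightarrow> Fin x \<in> S \<inter> T" by simp
    then show ?thesis by blast
  qed
  then show "rbar_open (S \<inter> T)" using o unfolding rbar_open_def by blast
next
  fix K :: "rbar set set" assume K: "\<forall>S\<in>K. rbar_open S"
  have "{x. Fin x \<in> \<Union>K} = (\<Union>S\<in>K. {x. Fin x \<in> S})" by auto
  moreover have "open (\<Union>S\<in>K. {x. Fin x \<in> S})" using K by (auto simp: rbar_open_def)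
  ultimately show "rbar_open (\<Union>K)" using K unfolding rbar_open_def by (metis UnionE UnionI)
qed

definition rbar_top :: "rbar topology" where
  "rbar_top = topology rbar_open"

fun lft :: "real \<Rightarrow> real \<Rightarrow> real \<Rightarrow> real \<Rightarrow> rbar \<Rightarrow> rbar" where
  "lft a b c d (Fin x) = (if c * x + d = 0 then Infty else Fin ((a * x + b) / (c * x + d)))"
| "lft a b c d Infty = (if c = 0 then Infty else Fin (a / c))"

definition mat_act :: "real^2^2 \<Rightarrow> rbar \<Rightarrow> rbar" where
  "mat_act P = lft (P$1$1) (P$1$2) (P$2$1) (P$2$2)"

definition complex_eigenvalue :: "real^2^2 \<Rightarrow> complex \<Rightarrow> bool" where
  "complex_eigenvalue P z \<longleftrightarrow>
     (\<exists>v::complex^2. v \<noteq> 0 \<and> (\<chi> i j. complex_of_real (P$i$j)) *v v = z *s v)"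

end

theory Submission
  imports Defs
begin


definition proj :: "real \<Rightarrow> real \<Rightarrow> rbar" where
  "proj x y = (if y = 0 then Infty else Fin (x / y))"

lemma lft_proj:
  assumes "a*d - b*c \<noteq> 0" "x \<noteq> 0 \<or> y \<noteq> 0"
  shows "lft a b c d (proj x y) = proj (a*x+b*y) (c*x+d*y)"
proof (cases "y = 0")
  case True
  then have x: "x \<noteq> 0" using assms by auto
  show ?thesis
  proof (cases "c = 0")
    case True then show ?thesis using \<open>y=0\<close> x by (simp add: proj_def)
  next
    case False then show ?thesis using \<open>y=0\<close> x by (simp add: proj_def)
  qed
next
  case False
  have "c*x + d*y = 0 \<longleftrightarrow> c*(x/y) + d = 0" using False
    by (simp add: field_simps)
  moreover have "c*(x/y) + d \<noteq> 0 \<Longrightarrow> (a*(x/y)+b)/(c*(x/y)+d) = (a*x+b*y)/(c*x+d*y)"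
  proof -
    have e1: "a*(x/y)+b = (a*x+b*y)/y" "c*(x/y)+d = (c*x+d*y)/y" using False by (auto simp: field_simps)
    show ?thesis unfolding e1 using False by simp
  qed
  ultimately show ?thesis using False by (simp add: proj_def)
qed

lemma proj_surj: "\<exists>x y. (x \<noteq> 0 \<or> y \<noteq> 0) \<and> p = proj x y"
proof (cases p)
  case (Fin t) then show ?thesis by (intro exI[of _ t] exI[of _ 1]) (simp add: proj_def)
next
  case Infty then show ?thesis by (intro exI[of _ 1] exI[of _ 0]) (simp add: proj_def)
qed

lemma lft_comp:
  assumes "a*d - b*c \<noteq> 0" "a'*d' - b'*c' \<noteq> 0"
  shows "lft a b c d (lft a' b' c' d' p) =
     lft (a*a'+b*c') (a*b'+b*d') (c*a'+d*c') (c*b'+d*d') p"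
proof -
  obtain x y where xy: "x \<noteq> 0 \<or> y \<noteq> 0" "p = proj x y" using proj_surj by blast
  have nz: "a'*x+b'*y \<noteq> 0 \<or> c'*x+d'*y \<noteq> 0"
  proof (rule ccontr)
    assume "\<not> ?thesis"
    then have h: "a'*x+b'*y = 0" "c'*x+d'*y = 0" by auto
    have "(a'*d' - b'*c') * x = d'*(a'*x+b'*y) - b'*(c'*x+d'*y)" by algebra
    moreover have "(a'*d' - b'*c') * y = a'*(c'*x+d'*y) - c'*(a'*x+b'*y)" by algebra
    ultimately show False using h xy(1) assms(2) by auto
  qed
  have det: "(a*a'+b*c')*(c*b'+d*d') - (a*b'+b*d')*(c*a'+d*c') = (a*d-b*c)*(a'*d'-b'*c')"
    by algebra
  have "lft a b c d (lft a' b' c' d' p) = lft a b c d (proj (a'*x+b'*y) (c'*x+d'*y))"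
    using xy assms by (simp add: lft_proj)
  also have "\<dots> = proj (a*(a'*x+b'*y)+b*(c'*x+d'*y)) (c*(a'*x+b'*y)+d*(c'*x+d'*y))"
    using nz assms by (simp add: lft_proj)
  also have "\<dots> = proj ((a*a'+b*c')*x+(a*b'+b*d')*y) ((c*a'+d*c')*x+(c*b'+d*d')*y)"
    by (simp add: algebra_simps)
  also have "\<dots> = lft (a*a'+b*c') (a*b'+b*d') (c*a'+d*c') (c*b'+d*d') p"
    using xy assms det by (simp add: lft_proj)
  finally show ?thesis .
qed

lemma lft_scale:
  assumes "k \<noteq> 0"
  shows "lft (k*a) (k*b) (k*c) (k*d) = lft a b c d"
proof
  fix p show "lft (k*a) (k*b) (k*c) (k*d) p = lft a b c d p"
  proof (cases p)
    case (Fin x)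
    have "k*c*x + k*d = k*(c*x+d)" by algebra
    moreover have "(k*a*x + k*b) = k*(a*x+b)" by algebra
    ultimately show ?thesis using Fin assms by simp
  qed (use assms in simp)
qed

lemma lft_id: "lft 1 0 0 1 = id"
proof
  fix p show "lft 1 0 0 1 p = id p" by (cases p) auto
qed

definition is_lft :: "(rbar \<Rightarrow> rbar) \<Rightarrow> bool" where
  "is_lft g \<longleftrightarrow> (\<exists>a b c d. a*d - b*c \<noteq> 0 \<and> g = lft a b c d)"

lemma is_lft_id: "is_lft id"
  unfolding is_lft_def by (rule exI[of _ 1], rule exI[of _ 0], rule exI[of _ 0], rule exI[of _ 1])
    (simp add: lft_id)

lemma is_lft_comp:
  assumes "is_lft g" "is_lft h" shows "is_lft (g \<circ> h)"
proof -
  obtain a b c d where g: "a*d-b*c \<noteq> 0" "g = lft a b c d" using assms(1) is_lft_def by auto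
  obtain a' b' c' d' where h: "a'*d'-b'*c' \<noteq> 0" "h = lft a' b' c' d'" using assms(2) is_lft_def by auto
  have det: "(a*a'+b*c')*(c*b'+d*d') - (a*b'+b*d')*(c*a'+d*c') = (a*d-b*c)*(a'*d'-b'*c')"
    by algebra
  show ?thesis unfolding is_lft_def
    apply (rule exI[of _ "a*a'+b*c'"], rule exI[of _ "a*b'+b*d'"], rule exI[of _ "c*a'+d*c'"],
       rule exI[of _ "c*b'+d*d'"])
    using g h det by (auto simp: lft_comp)
qed

lemma is_lft_inv:
  assumes "is_lft g" shows "\<exists>g'. is_lft g' \<and> (\<forall>x. g' (g x) = x) \<and> (\<forall>x. g (g' x) = x)"
proof -
  obtain a b c d where g: "a*d-b*c \<noteq> 0" "g = lft a b c d" using assms(1) is_lft_def by auto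
  let ?D = "a*d-b*c"
  have 1: "lft d (-b) (-c) a (lft a b c d x) = x" for x
  proof -
    have "lft d (-b) (-c) a (lft a b c d x) = lft (?D*1) (?D*0) (?D*0) (?D*1) x"
      using g by (subst lft_comp) (auto simp: algebra_simps)
    also have "\<dots> = x" using g lft_scale[of ?D 1 0 0 1] by (simp add: lft_id)
    finally show ?thesis .
  qed
  have 2: "lft a b c d (lft d (-b) (-c) a x) = x" for x
  proof -
    have "lft a b c d (lft d (-b) (-c) a x) = lft (?D*1) (?D*0) (?D*0) (?D*1) x"
      using g by (subst lft_comp) (auto simp: algebra_simps)
    also have "\<dots> = x" using g lft_scale[of ?D 1 0 0 1] by (simp add: lft_id)
    finally show ?thesis .
  qed
  show ?thesis
  proof (intro exI conjI allI)
    show "is_lft (lft d (-b) (-c) a)" unfolding is_lft_def using g(1)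
      by (intro exI[of _ d] exI[of _ "-b"] exI[of _ "-c"] exI[of _ a]) (auto simp: algebra_simps)
  qed (use 1 2 g in auto)
qed



lemma openin_rbar: "openin rbar_top = rbar_open"
  unfolding rbar_top_def by (simp add: istopology_rbar_open)

lemma topspace_rbar: "topspace rbar_top = UNIV"
proof -
  have "rbar_open UNIV" unfolding rbar_open_def by simp
  then show ?thesis unfolding topspace_def openin_rbar by auto
qed

lemma rbar_open_iff:
  "rbar_open U \<longleftrightarrow> open {v::real\<times>real. v \<noteq> 0 \<and> proj (fst v) (snd v) \<in> U}"
  (is "_ \<longleftrightarrow> open ?S")
proof
  assume R: "rbar_open U"
  define Ov where "Ov = {t. Fin t \<in> U}"
  have oO: "open Ov" using R unfolding Ov_def rbar_open_def by auto
  define S1 where "S1 = {w::real\<times>real. snd w \<noteq> 0 \<and> fst w / snd w \<in> Ov}"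
  have oS1: "open S1"
  proof -
    have "continuous_on {w::real\<times>real. snd w \<noteq> 0} (\<lambda>w. fst w / snd w)"
      by (intro continuous_intros) auto
    moreover have "open {w::real\<times>real. snd w \<noteq> 0}"
      by (intro open_Collect_neq continuous_intros)
    ultimately have "open ((\<lambda>w. fst w / snd w) -` Ov \<inter> {w::real\<times>real. snd w \<noteq> 0})"
      using oO continuous_on_open_vimage by blast
    moreover have "(\<lambda>w. fst w / snd w) -` Ov \<inter> {w::real\<times>real. snd w \<noteq> 0} = S1"
      unfolding S1_def by auto
    ultimately show ?thesis by simp
  qed
  have S1S: "S1 \<subseteq> ?S" unfolding S1_def Ov_def by (auto simp: proj_def)
  show "open ?S"
  proof (cases "Infty \<in> U")
    case False
    have "?S = S1"
    proof
      show "?S \<subseteq> S1"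
      proof
        fix w assume w: "w \<in> ?S"
        then have "snd w \<noteq> 0" using False by (auto simp: proj_def split: if_splits)
        then show "w \<in> S1" using w unfolding S1_def Ov_def by (auto simp: proj_def)
      qed
    qed (rule S1S)
    then show ?thesis using oS1 by simp
  next
    case True
    then obtain M where M: "\<forall>x. \<bar>x\<bar> > M \<longrightarrow> Fin x \<in> U" using R unfolding rbar_open_def by blast
    define S2 where "S2 = {w::real\<times>real. \<bar>snd w\<bar> * (\<bar>M\<bar>+1) < \<bar>fst w\<bar>}"
    have oS2: "open S2" unfolding S2_def
      by (intro open_Collect_less continuous_intros)
    have S2S: "S2 \<subseteq> ?S"
    proof
      fix w :: "real\<times>real" assume w: "w \<in> S2"
      obtain x y where xy: "w = (x,y)" by force
      have lt: "\<bar>y\<bar> * (\<bar>M\<bar>+1) < \<bar>x\<bar>" using w xy S2_def by auto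
      then have "x \<noteq> 0" by (metis abs_ge_zero abs_zero leD mult_nonneg_nonneg
            add_nonneg_nonneg zero_le_one)
      moreover have "proj x y \<in> U"
      proof (cases "y = 0")
        case True then show ?thesis using \<open>Infty \<in> U\<close> by (simp add: proj_def)
      next
        case False
        have "\<bar>x / y\<bar> = \<bar>x\<bar> / \<bar>y\<bar>" by (simp add: abs_divide)
        moreover have "\<bar>x\<bar> / \<bar>y\<bar> > \<bar>M\<bar>+1" using lt False
          by (simp add: field_simps)
        ultimately have "\<bar>x / y\<bar> > M" by linarith
        then show ?thesis using M False by (simp add: proj_def)
      qed
      ultimately show "w \<in> ?S" using xy by (auto simp: zero_prod_def)
    qed
    have "?S = S1 \<union> S2"
    proof
      show "?S \<subseteq> S1 \<union> S2"
      proof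
        fix w :: "real\<times>real" assume w: "w \<in> ?S"
        obtain x y where xy: "w = (x,y)" by force
        show "w \<in> S1 \<union> S2"
        proof (cases "y = 0")
          case True
          then have "x \<noteq> 0" using w xy by (auto simp: zero_prod_def)
          then have "w \<in> S2" using True xy unfolding S2_def by auto
          then show ?thesis by auto
        next
          case False
          then have "w \<in> S1" using w xy unfolding S1_def Ov_def by (auto simp: proj_def)
          then show ?thesis by auto
        qed
      qed
    qed (use S1S S2S in auto)
    then show ?thesis using oS1 oS2 by auto
  qed
next
  assume oS: "open ?S"
  have "open {t. Fin t \<in> U}"
  proof -
    have "open ((\<lambda>t::real. (t, 1::real)) -` ?S)"
      by (rule open_vimage[OF oS]) (intro continuous_intros)
    moreover have "(\<lambda>t::real. (t, 1::real)) -` ?S = {t. Fin t \<in> U}"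
      by (auto simp: proj_def zero_prod_def)
    ultimately show ?thesis by simp
  qed
  moreover have "\<exists>M. \<forall>x. \<bar>x\<bar> > M \<longrightarrow> Fin x \<in> U" if inf: "Infty \<in> U"
  proof -
    have "(1::real, 0::real) \<in> ?S" using inf by (simp add: proj_def zero_prod_def)
    then obtain e where e: "e > 0" "\<forall>w. dist w (1::real,0::real) < e \<longrightarrow> w \<in> ?S"
      using oS unfolding open_dist by blast
    show ?thesis
    proof (intro exI[of _ "1/e"] allI impI)
      fix x :: real assume x: "\<bar>x\<bar> > 1/e"
      then have x0: "x \<noteq> 0" using e by (auto simp: divide_pos_pos)
      have "dist (1::real, 1/x) (1, 0) = \<bar>1/x\<bar>" by (simp add: dist_Pair_Pair dist_real_def)
      also have "\<dots> < e" using x e x0 by (simp add: field_simps abs_divide)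
      finally have "(1::real, 1/x) \<in> ?S" using e by blast
      then show "Fin x \<in> U" using x0 by (simp add: proj_def zero_prod_def)
    qed
  qed
  ultimately show "rbar_open U" unfolding rbar_open_def by blast
qed

lemma rbar_open_lft_vimage:
  assumes U: "rbar_open U" and det: "a*d - b*c \<noteq> 0"
  shows "rbar_open (lft a b c d -` U)"
proof -
  define L where "L = (\<lambda>v::real\<times>real. (a* fst v + b* snd v, c* fst v + d* snd v))"
  have cL: "continuous_on UNIV L" unfolding L_def by (intro continuous_intros)
  have Lnz: "L v \<noteq> 0 \<longleftrightarrow> v \<noteq> 0" for v
  proof -
    obtain x y where v: "v = (x,y)" by force
    have "(a*d - b*c) * x = d*(a*x+b*y) - b*(c*x+d*y)" by algebra
    moreover have "(a*d - b*c) * y = a*(c*x+d*y) - c*(a*x+b*y)" by algebra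
    ultimately show ?thesis using det v unfolding L_def by (auto simp: zero_prod_def)
  qed
  have "{v::real\<times>real. v \<noteq> 0 \<and> proj (fst v) (snd v) \<in> lft a b c d -` U} =
        L -` {v::real\<times>real. v \<noteq> 0 \<and> proj (fst v) (snd v) \<in> U}"
  proof (rule set_eqI)
    fix v :: "real\<times>real"
    obtain x y where v: "v = (x,y)" by force
    show "v \<in> {v. v \<noteq> 0 \<and> proj (fst v) (snd v) \<in> lft a b c d -` U} \<longleftrightarrow>
          v \<in> L -` {v. v \<noteq> 0 \<and> proj (fst v) (snd v) \<in> U}"
    proof (cases "v = 0")
      case False
      then have "x \<noteq> 0 \<or> y \<noteq> 0" using v by (auto simp: zero_prod_def)
      then show ?thesis using False Lnz[of v] v det by (auto simp: lft_proj L_def)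
    qed (use Lnz in auto)
  qed
  moreover have "open (L -` {v::real\<times>real. v \<noteq> 0 \<and> proj (fst v) (snd v) \<in> U})"
    using U rbar_open_iff open_vimage cL by blast
  ultimately show ?thesis using rbar_open_iff by simp
qed

lemma is_lft_cont: "is_lft g \<Longrightarrow> continuous_map rbar_top rbar_top g"
  unfolding continuous_map topspace_rbar openin_rbar is_lft_def
  using rbar_open_lft_vimage by (auto simp: vimage_def)



definition ang :: "real \<Rightarrow> rbar" where "ang t = proj (cos t) (sin t)"
definition rot :: "real \<Rightarrow> rbar \<Rightarrow> rbar" where "rot t = lft (cos t) (- sin t) (sin t) (cos t)"
definition acot :: "real \<Rightarrow> real" where "acot y = pi/2 - arctan y"

lemma cs_nz: "cos (t::real) \<noteq> 0 \<or> sin t \<noteq> 0"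
proof (rule ccontr)
  assume "\<not> ?thesis"
  then have "(sin t)^2 + (cos t)^2 = 0" by simp
  then show False using sin_cos_squared_add[of t] by simp
qed

lemma rot_det: "cos (t::real) * cos t - (- sin t) * sin t \<noteq> 0"
  using sin_cos_squared_add[of t] by (simp add: power2_eq_square)

lemma is_lft_rot: "is_lft (rot t)"
  unfolding is_lft_def rot_def using rot_det by blast

lemma ang_rot: "rot t (ang p) = ang (p + t)"
  unfolding rot_def ang_def using cs_nz[of p] rot_det[of t]
  by (simp add: lft_proj cos_add sin_add algebra_simps)

lemma proj_scale: "k \<noteq> 0 \<Longrightarrow> proj (k*x) (k*y) = proj x y"
  by (simp add: proj_def)

lemma ang_surj: "\<exists>t. p = ang t"
proof (cases p)
  case (Fin y)
  have "ang (acot y) = Fin y"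
  proof -
    have "cos (acot y) = sin (arctan y)" "sin (acot y) = cos (arctan y)"
      unfolding acot_def by (simp_all add: cos_diff sin_diff)
    then show ?thesis unfolding ang_def proj_def
      using tan_arctan[of y] by (simp add: tan_def)
  qed
  then show ?thesis using Fin by metis
next
  case Infty then show ?thesis by (intro exI[of _ 0]) (simp add: ang_def proj_def)
qed

lemma acot_bounds: "0 < acot y" "acot y < pi"
  unfolding acot_def using arctan_bounded[of y] by auto

lemma ang_acot: "ang (acot y) = Fin y"
proof -
  have "cos (acot y) = sin (arctan y)" "sin (acot y) = cos (arctan y)"
    unfolding acot_def by (simp_all add: cos_diff sin_diff)
  then show ?thesis unfolding ang_def proj_def
    using tan_arctan[of y] by (simp add: tan_def)
qed

lemma ang_cot: "0 < t \<Longrightarrow> t < pi \<Longrightarrow> ang t = Fin (cot t)"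
  using sin_gt_zero[of t] unfolding ang_def proj_def cot_def by simp

lemma acot_cot: "0 < t \<Longrightarrow> t < pi \<Longrightarrow> acot (cot t) = t"
  unfolding acot_def using arctan_tan[of "pi/2 - t"] by (simp add: tan_cot')

lemma ang_eq: "ang a = ang b \<Longrightarrow> \<exists>m::int. a = b + m * pi"
proof -
  assume E: "ang a = ang b"
  show ?thesis
  proof (cases "sin a = 0")
    case True
    then have "sin b = 0" using E unfolding ang_def proj_def by (auto split: if_splits)
    then obtain i j :: int where "a = i*pi" "b = j*pi" using True sin_zero_iff_int2 by metis
    then have "a = b + (i - j)*pi" by (simp add: algebra_simps)
    then show ?thesis by blast
  next
    case False
    then have sb: "sin b \<noteq> 0" using E unfolding ang_def proj_def by (auto split: if_splits)
    then have "cos a / sin a = cos b / sin b" using E False unfolding ang_def proj_def by auto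
    then have "cos a * sin b = cos b * sin a" using False sb by (simp add: field_simps)
    then have "sin (b - a) = 0" by (simp add: sin_diff algebra_simps)
    then obtain i :: int where "b - a = i*pi" using sin_zero_iff_int2 by metis
    then have "a = b + (-i)*pi" by simp
    then show ?thesis by blast
  qed
qed

lemma ang_period: "ang (a + of_int m * pi) = ang a"
proof -
  have s: "sin (of_int m * pi) = 0" using sin_zero_iff_int2 by blast
  then have c: "cos (of_int m * pi) \<noteq> 0" using sin_cos_squared_add[of "of_int m * pi"] by auto
  have "ang (a + of_int m * pi) = proj (cos (of_int m * pi) * cos a) (cos (of_int m * pi) * sin a)"
    unfolding ang_def by (simp add: cos_add sin_add s algebra_simps)
  then show ?thesis using c proj_scale unfolding ang_def by simp
qed

lemma fun_eq_ang: "(\<And>t. g (ang t) = g' (ang t)) \<Longrightarrow> g = g'"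
  by (metis ang_surj ext)

lemma rot_norm:
  assumes "sin s \<noteq> 0"
  shows "\<exists>s'. 0 < s' \<and> s' < pi \<and> rot s' = rot s \<and> (\<exists>m::int. s' = s + m*pi)"
proof -
  define m where "m = - \<lfloor>s/pi\<rfloor>"
  define s' where "s' = s + m*pi"
  have f1: "\<lfloor>s/pi\<rfloor> \<le> s/pi" and f2: "s/pi < \<lfloor>s/pi\<rfloor> + 1" by linarith+
  have "\<lfloor>s/pi\<rfloor>*pi \<le> s" using f1 pi_gt_zero by (simp add: le_divide_eq)
  moreover have "s < (\<lfloor>s/pi\<rfloor> + 1)*pi" using f2 pi_gt_zero by (simp only: divide_less_eq)
  ultimately have b: "0 \<le> s'" "s' < pi" unfolding s'_def m_def by (simp_all add: algebra_simps)
  have "s' \<noteq> 0"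
  proof
    assume "s' = 0"
    then have "s = (-m)*pi" unfolding s'_def by simp
    then show False using assms sin_zero_iff_int2 by metis
  qed
  moreover have "rot s' = rot s"
    by (rule fun_eq_ang) (simp add: ang_rot s'_def ang_period flip: add.assoc)
  ultimately show ?thesis using b s'_def by (intro exI[of _ s']) auto
qed

lemma rot_add: "rot a (rot b x) = rot (a + b) x"
proof -
  obtain t where "x = ang t" using ang_surj by blast
  then show ?thesis by (simp add: ang_rot algebra_simps)
qed

definition sig :: "rbar \<Rightarrow> rbar" where "sig = lft (-1) 0 0 1"

lemma is_lft_sig: "is_lft sig" unfolding is_lft_def sig_def by force

lemma sig_ang: "sig (ang t) = ang (-t)"
proof -
  have "sig (ang t) = proj (-1 * cos t) (-1 * (- sin t))"
    unfolding sig_def ang_def using cs_nz[of t] by (simp add: lft_proj)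
  also have "\<dots> = ang (-t)" unfolding ang_def by (subst proj_scale) auto
  finally show ?thesis .
qed

lemma sig_Fin: "sig (Fin x) = Fin (-x)" "sig Infty = Infty"
  by (simp_all add: sig_def)



lemma floor_rem:
  fixes t :: real
  shows "0 \<le> t - \<lfloor>t/pi\<rfloor>*pi" "t - \<lfloor>t/pi\<rfloor>*pi < pi"
proof -
  have f1: "\<lfloor>t/pi\<rfloor> \<le> t/pi" and f2: "t/pi < \<lfloor>t/pi\<rfloor> + 1" by linarith+
  have "\<lfloor>t/pi\<rfloor>*pi \<le> t" using f1 pi_gt_zero by (simp add: le_divide_eq)
  moreover have "t < (\<lfloor>t/pi\<rfloor> + 1)*pi" using f2 pi_gt_zero by (simp only: divide_less_eq)
  ultimately show "0 \<le> t - \<lfloor>t/pi\<rfloor>*pi" "t - \<lfloor>t/pi\<rfloor>*pi < pi" by (simp_all add: algebra_simps)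
qed

lemma floor_shift: "\<lfloor>(t + of_int j * pi)/pi\<rfloor> = \<lfloor>t/pi\<rfloor> + j"
proof -
  have "(t + of_int j * pi)/pi = t/pi + of_int j" using pi_gt_zero by (simp add: field_simps)
  then show ?thesis by simp
qed

lemma cot_decr: "0 < a \<Longrightarrow> a < b \<Longrightarrow> b < pi \<Longrightarrow> cot b < cot a"
  using tan_monotone[of "pi/2 - b" "pi/2 - a"] by (simp add: tan_cot')

lemma core:
  fixes h :: "rbar \<Rightarrow> rbar" and k :: "real \<Rightarrow> real" and \<theta> \<psi> :: real
  assumes hinf: "h Infty = Infty" and hk: "\<And>x. h (Fin x) = Fin (k x)" and mono: "strict_mono k"
    and th: "0 < \<theta>" "\<theta> < pi" and ps: "0 < \<psi>" "\<psi> < pi" and irr: "\<theta>/pi \<notin> \<rat>"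
    and comm: "\<And>x. h (rot \<theta> x) = rot \<psi> (h x)"
  shows "h x = x"
proof -
  define Hb where "Hb t = (if t = 0 then 0 else acot (k (cot t)))" for t
  define H where "H t = Hb (t - \<lfloor>t/pi\<rfloor>*pi) + \<lfloor>t/pi\<rfloor>*pi" for t
  have Hb_rng: "0 \<le> Hb t \<and> Hb t < pi" for t
    unfolding Hb_def using acot_bounds[of "k (cot t)"] by auto
  have Hb_mono: "Hb a < Hb b" if "0 \<le> a" "a < b" "b < pi" for a b
  proof (cases "a = 0")
    case True then show ?thesis using that acot_bounds unfolding Hb_def by auto
  next
    case False
    then have "cot b < cot a" using that cot_decr by auto
    then have "k (cot b) < k (cot a)" using mono by (simp add: strict_mono_less)
    then have "arctan (k (cot b)) < arctan (k (cot a))" by (simp add: arctan_less_iff)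
    then show ?thesis using False that unfolding Hb_def acot_def by auto
  qed
  have H_shift: "H (t + of_int j * pi) = H t + of_int j * pi" for t j
    unfolding H_def floor_shift by (simp add: algebra_simps)
  have H_mono: "H a < H b" if "a < b" for a b
  proof -
    let ?ma = "\<lfloor>a/pi\<rfloor>" and ?mb = "\<lfloor>b/pi\<rfloor>"
    have "a/pi \<le> b/pi" using that pi_gt_zero by (simp add: divide_right_mono)
    then have le: "?ma \<le> ?mb" by (rule floor_mono)
    show ?thesis
    proof (cases "?ma = ?mb")
      case True
      have "a - ?ma*pi < b - ?mb*pi" using True that by simp
      then have "Hb (a - ?ma*pi) < Hb (b - ?mb*pi)"
        using Hb_mono floor_rem[of a] floor_rem[of b] by blast
      then show ?thesis unfolding H_def using True by simp
    next
      case False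
      then have "?ma + 1 \<le> ?mb" using le by simp
      then have "real_of_int (?ma + 1) * pi \<le> ?mb * pi" using pi_gt_zero
        by (intro mult_right_mono) (simp_all only: of_int_le_iff)
      then show ?thesis unfolding H_def using Hb_rng[of "a - ?ma*pi"] Hb_rng[of "b - ?mb*pi"]
        by (simp add: algebra_simps)
    qed
  qed
  have H_ang: "ang (H t) = h (ang t)" for t
  proof -
    define r where "r = t - \<lfloor>t/pi\<rfloor>*pi"
    have r: "0 \<le> r" "r < pi" using floor_rem[of t] r_def by auto
    have "ang (H t) = ang (Hb r)" unfolding H_def r_def[symmetric] by (simp add: ang_period)
    moreover have "ang t = ang r" using ang_period[of r "\<lfloor>t/pi\<rfloor>"] r_def by simp
    moreover have "ang (Hb r) = h (ang r)"
    proof (cases "r = 0")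
      case True then show ?thesis using hinf unfolding Hb_def by (simp add: ang_def proj_def)
    next
      case False
      then have "ang r = Fin (cot r)" using r ang_cot by auto
      then show ?thesis using False hk unfolding Hb_def by (simp add: ang_acot)
    qed
    ultimately show ?thesis by simp
  qed
  have H0: "H 0 = 0" unfolding H_def Hb_def by simp
  have H_step: "H (t + \<theta>) = H t + \<psi>" for t
  proof -
    have "ang (H (t + \<theta>)) = h (rot \<theta> (ang t))" by (simp add: H_ang ang_rot)
    also have "\<dots> = rot \<psi> (h (ang t))" by (rule comm)
    also have "\<dots> = ang (H t + \<psi>)" by (simp only: H_ang[symmetric] ang_rot)
    finally obtain m :: int where m: "H (t + \<theta>) = H t + \<psi> + m*pi" using ang_eq by blast
    have "H t < H (t + \<theta>)" using th H_mono by simp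
    moreover have "H (t + \<theta>) < H (t + of_int 1 * pi)" using th H_mono by simp
    ultimately have "0 < \<psi> + m*pi" "\<psi> + m*pi < pi" using m H_shift[of t 1] by auto
    then have b1: "(-1) * pi < real_of_int m * pi" "real_of_int m * pi < 1 * pi" using ps
      by linarith+
    have "-1 < real_of_int m"
    proof (rule ccontr)
      assume "\<not> ?thesis"
      then have "real_of_int m * pi \<le> -1 * pi" by (intro mult_right_mono) (use pi_gt_zero in auto)
      then show False using b1(1) by linarith
    qed
    moreover have "real_of_int m < 1"
    proof (rule ccontr)
      assume "\<not> ?thesis"
      then have "1 * pi \<le> real_of_int m * pi" by (intro mult_right_mono) (use pi_gt_zero in auto)
      then show False using b1(2) by linarith
    qed
    ultimately have "m = 0" by linarith
    then show ?thesis using m by simp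
  qed
  have H_n: "H (of_nat n * \<theta>) = of_nat n * \<psi>" for n
  proof (induction n)
    case (Suc n)
    have "H (of_nat (Suc n) * \<theta>) = H (of_nat n * \<theta> + \<theta>)" by (simp add: algebra_simps)
    also have "\<dots> = of_nat n * \<psi> + \<psi>" using H_step Suc by simp
    finally show ?case by (simp add: algebra_simps)
  qed (simp add: H0)
  have eq: "\<psi> = \<theta>"
  proof (rule ccontr)
    assume ne: "\<psi> \<noteq> \<theta>"
    obtain n :: nat where n: "pi / \<bar>\<psi> - \<theta>\<bar> < of_nat n" using reals_Archimedean2 by blast
    have big: "pi < of_nat n * \<bar>\<psi> - \<theta>\<bar>" using n ne by (simp add: divide_less_eq)
    show False
    proof (cases "\<theta> < \<psi>")
      case True
      define j where "j = \<lfloor>(of_nat n * \<theta>)/pi\<rfloor> + 1"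
      have r: "0 \<le> of_nat n * \<theta> - \<lfloor>(of_nat n * \<theta>)/pi\<rfloor>*pi"
        "of_nat n * \<theta> - \<lfloor>(of_nat n * \<theta>)/pi\<rfloor>*pi < pi" using floor_rem by auto
      have 1: "of_nat n * \<theta> < j * pi" using r unfolding j_def by (simp add: algebra_simps)
      have 2: "j * pi < of_nat n * \<psi>" using r big True unfolding j_def
        by (simp add: algebra_simps)
      have "H (of_nat n * \<theta>) < H (0 + of_int j * pi)" using 1 H_mono by simp
      then have "of_nat n * \<psi> < j * pi" using H_n H_shift[of 0 j] H0 by simp
      then show False using 2 by simp
    next
      case False
      then have lt: "\<psi> < \<theta>" using ne by simp
      define j where "j = \<lfloor>(of_nat n * \<psi>)/pi\<rfloor> + 1"
      have r: "0 \<le> of_nat n * \<psi> - \<lfloor>(of_nat n * \<psi>)/pi\<rfloor>*pi"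
        "of_nat n * \<psi> - \<lfloor>(of_nat n * \<psi>)/pi\<rfloor>*pi < pi" using floor_rem by auto
      have 1: "of_nat n * \<psi> < j * pi" using r unfolding j_def by (simp add: algebra_simps)
      have 2: "j * pi < of_nat n * \<theta>" using r big lt unfolding j_def
        by (simp add: algebra_simps)
      have "H (0 + of_int j * pi) < H (of_nat n * \<theta>)" using 2 H_mono by simp
      then have "j * pi < of_nat n * \<psi>" using H_n H_shift[of 0 j] H0 by simp
      then show False using 1 by simp
    qed
  qed
  have dense: "\<exists>p. \<bar>p - y\<bar> < \<epsilon> \<and> H p = p" if epos: "\<epsilon> > 0" for y \<epsilon>
  proof -
    have ep: "\<epsilon>/pi > 0" using epos by simp
    obtain a b :: int where ab: "b > 0" "\<bar>of_int b * (\<theta>/pi) - of_int a - y/pi\<bar> < \<epsilon>/pi"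
      using sequence_of_fractional_parts_is_dense[OF irr ep, of "y/pi"] by metis
    have "\<bar>of_int b * (\<theta>/pi) - of_int a - y/pi\<bar> = \<bar>of_int b * \<theta> - of_int a * pi - y\<bar> / pi"
    proof -
      have "of_int b * (\<theta>/pi) - of_int a - y/pi = (of_int b*\<theta> - of_int a*pi - y)/pi"
        using pi_gt_zero by (simp add: field_simps)
      then show ?thesis using pi_gt_zero by (simp add: abs_divide)
    qed
    then have close: "\<bar>of_int b * \<theta> - of_int a * pi - y\<bar> < \<epsilon>"
      using ab(2) pi_gt_zero by (simp add: divide_less_eq)
    have "H (of_nat (nat b) * \<theta> + of_int (-a) * pi) = of_nat (nat b) * \<theta> + of_int (-a) * pi"
      using H_shift[of "of_nat (nat b) * \<theta>" "-a"] H_n[of "nat b"] eq by simp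
    moreover have "of_nat (nat b) * \<theta> + of_int (-a) * pi = of_int b * \<theta> - of_int a * pi"
      using ab(1) by simp
    ultimately show ?thesis using close by metis
  qed
  have Hid: "H t = t" for t
  proof (rule ccontr)
    assume "H t \<noteq> t"
    then consider "H t > t" | "H t < t" by linarith
    then show False
    proof cases
      case 1
      define e where "e = (H t - t)/2"
      obtain p where p: "\<bar>p - (t + e)\<bar> < e" "H p = p" using dense[of e "t+e"] 1 e_def by auto
      have q: "p - (t+e) < e" "-(p - (t+e)) < e" using p(1) by (simp_all only: abs_less_iff)
      have "t < p" using q e_def by argo
      have "p < H t" using q e_def by argo
      then show False using H_mono[of t p] p(2) \<open>t < p\<close> by simp
    next
      case 2
      define e where "e = (t - H t)/2"
      obtain p where p: "\<bar>p - (t - e)\<bar> < e" "H p = p" using dense[of e "t-e"] 2 e_def by auto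
      have q: "p - (t-e) < e" "-(p - (t-e)) < e" using p(1) by (simp_all only: abs_less_iff)
      have "H t < p" using q e_def by argo
      have "p < t" using q e_def by argo
      then show False using H_mono[of p t] p(2) \<open>H t < p\<close> by simp
    qed
  qed
  obtain t where "x = ang t" using ang_surj by blast
  then show ?thesis using H_ang[of t] Hid by simp
qed



lemma eigen_trace_det:
  fixes P :: "real^2^2"
  assumes ev: "complex_eigenvalue P (Complex (cos \<alpha>) (sin \<alpha>))" and s: "sin \<alpha> \<noteq> 0"
  shows "P$1$1 + P$2$2 = 2 * cos \<alpha>" "P$1$1 * P$2$2 - P$1$2 * P$2$1 = 1"
proof -
  let ?z = "Complex (cos \<alpha>) (sin \<alpha>)"
  obtain v :: "complex^2" where v: "v \<noteq> 0" "(\<chi> i j. complex_of_real (P$i$j)) *v v = ?z *s v"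
    using ev unfolding complex_eigenvalue_def by blast
  let ?a = "complex_of_real (P$1$1)" and ?b = "complex_of_real (P$1$2)"
  let ?c = "complex_of_real (P$2$1)" and ?d = "complex_of_real (P$2$2)"
  have e1: "?a * v$1 + ?b * v$2 = ?z * v$1"
    using arg_cong[OF v(2), of "\<lambda>w. w$1"] by (simp add: matrix_vector_mult_def sum_2)
  have e2: "?c * v$1 + ?d * v$2 = ?z * v$2"
    using arg_cong[OF v(2), of "\<lambda>w. w$2"] by (simp add: matrix_vector_mult_def sum_2)
  define D where "D = (?a - ?z) * (?d - ?z) - ?b * ?c"
  have "D * v$1 = (?d - ?z) * (?a * v$1 + ?b * v$2 - ?z * v$1) - ?b * (?c * v$1 + ?d * v$2 - ?z * v$2)"
    unfolding D_def by algebra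
  then have d1: "D * v$1 = 0" using e1 e2 by simp
  have "D * v$2 = (?a - ?z) * (?c * v$1 + ?d * v$2 - ?z * v$2) - ?c * (?a * v$1 + ?b * v$2 - ?z * v$1)"
    unfolding D_def by algebra
  then have d2: "D * v$2 = 0" using e1 e2 by simp
  have "v$1 \<noteq> 0 \<or> v$2 \<noteq> 0" using v(1) by (auto simp: vec_eq_iff forall_2)
  then have D0: "D = 0" using d1 d2 by auto
  have re: "Re D = 0" and im: "Im D = 0" using D0 by simp_all
  have im': "sin \<alpha> * (2 * cos \<alpha> - P$1$1 - P$2$2) = 0"
    using im unfolding D_def by (simp add: algebra_simps)
  then show tr: "P$1$1 + P$2$2 = 2 * cos \<alpha>" using s by simp
  have X: "(P$1$1 - cos \<alpha>) * (P$2$2 - cos \<alpha>) - sin \<alpha> * sin \<alpha> - P$1$2 * P$2$1 = 0"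
    using re unfolding D_def by (simp add: algebra_simps)
  have Y: "(P$1$1 - cos \<alpha>) * (P$2$2 - cos \<alpha>) = P$1$1 * P$2$2 - cos \<alpha> * (P$1$1 + P$2$2) + cos \<alpha> * cos \<alpha>"
    by algebra
  have Z: "cos \<alpha> * (P$1$1 + P$2$2) = 2 * (cos \<alpha> * cos \<alpha>)" using tr by simp
  show "P$1$1 * P$2$2 - P$1$2 * P$2$1 = 1"
    using X Y Z sin_cos_squared_add3[of \<alpha>] by linarith
qed

lemma lft_nofix:
  assumes "(d-a)^2 + 4*b*c < 0"
  shows "lft a b c d x \<noteq> x"
proof
  assume fx: "lft a b c d x = x"
  have c: "c \<noteq> 0" using assms by (auto simp: power2_eq_square)
  show False
  proof (cases x)
    case Infty then show False using fx c by simp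
  next
    case (Fin y)
    then have ne: "c*y + d \<noteq> 0" and q: "(a*y+b)/(c*y+d) = y" using fx by (auto split: if_splits)
    then have "a*y + b = y*(c*y+d)" by (simp add: field_simps)
    then have "c*y*y + (d-a)*y - b = 0" by (simp add: algebra_simps)
    then have "4*c*(c*y*y + (d-a)*y - b) = 0" by simp
    moreover have "4*c*(c*y*y + (d-a)*y - b) = (2*c*y + (d-a))^2 - ((d-a)^2 + 4*b*c)"
      by (simp add: algebra_simps power2_eq_square)
    ultimately have "(2*c*y + (d-a))^2 = (d-a)^2 + 4*b*c" by simp
    then show False using assms by (metis not_less zero_le_power2)
  qed
qed

lemma lft_fix:
  assumes det: "a*d - b*c \<noteq> 0" and D: "(d-a)^2 + 4*b*c \<ge> 0"
  shows "\<exists>x. lft a b c d x = x"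
proof (cases "c = 0")
  case True then show ?thesis by (intro exI[of _ Infty]) simp
next
  case False
  define y where "y = ((a-d) + sqrt ((d-a)^2 + 4*b*c))/(2*c)"
  have sq: "(sqrt ((d-a)^2 + 4*b*c))^2 = (d-a)^2 + 4*b*c" using D by simp
  have "2*c*y = (a-d) + sqrt ((d-a)^2 + 4*b*c)" unfolding y_def using False by simp
  then have "(2*c*y - (a-d))^2 = (d-a)^2 + 4*b*c" using sq by simp
  then have "4*c*(c*y*y + (d-a)*y - b) = 0" by (simp add: algebra_simps power2_eq_square)
  then have quad: "c*y*y + (d-a)*y - b = 0" using False by simp
  have ne: "c*y + d \<noteq> 0"
  proof
    assume z: "c*y + d = 0"
    have "a*y+b = y*(c*y+d) - (c*y*y + (d-a)*y - b)" by algebra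
    then have "a*y + b = 0" using z quad by simp
    have "(a*d - b*c) * y = d*(a*y+b) - b*(c*y+d)" by algebra
    then have y0: "(a*d-b*c)*y = 0" using z \<open>a*y+b = 0\<close> by simp
    then have "y = 0" using det by simp
    then show False using z \<open>a*y+b=0\<close> det by simp
  qed
  have "a*y + b = y*(c*y+d)" using quad by (simp add: algebra_simps)
  then have "(a*y+b)/(c*y+d) = y" using ne by (simp add: field_simps)
  then show ?thesis using ne by (intro exI[of _ "Fin y"]) simp
qed

lemma ell:
  assumes DD: "(d-a)^2 + 4 * b * c < 0"
  shows "\<exists>g cs sn. is_lft g \<and> cs^2 + sn^2 = 1 \<and> sn \<noteq> 0 \<and> cs * sqrt (a * d-b * c) = (a+d)/2 \<and>
     (\<forall>x. lft a b c d (g x) = g (lft cs (-sn) sn cs x))"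
proof -
  define D where "D = (d-a)^2 + 4 * b * c"
  have Dn: "D < 0" using DD D_def by simp
  have c: "c \<noteq> 0" using DD by (auto simp: power2_eq_square)
  have "4 * (a * d - b * c) = (a+d)^2 - D" unfolding D_def by (simp add: algebra_simps power2_eq_square)
  moreover have "(a+d)^2 \<ge> 0" by simp
  ultimately have det: "a * d - b * c > 0" using Dn by argo
  define u where "u = (a-d)/(2 * c)"
  define v where "v = sqrt (-D)/(2 * \<bar>c\<bar>)"
  have v0: "v > 0" unfolding v_def using Dn c by simp
  have vv: "v * v = -D/(4 * c * c)"
  proof -
    have "v * v = (sqrt (-D))^2 / (4 * (\<bar>c\<bar> * \<bar>c\<bar>))" unfolding v_def by (simp add: power2_eq_square)
    also have "\<dots> = -D/(4 * c * c)" using Dn by (simp add: abs_mult_self_eq)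
    finally show ?thesis .
  qed
  define s where "s = v * (a+d)/2"
  define t where "t = -D/(4 * c)"
  have t0: "t \<noteq> 0" unfolding t_def using Dn c by simp
  define r where "r = v * sqrt (a * d-b * c)"
  have r0: "r > 0" unfolding r_def using v0 det by simp
  have rr: "r * r = v * v * (a * d-b * c)" unfolding r_def using det
    by (simp add: algebra_simps)
  have ss: "s * s = v * v * ((a+d) * (a+d)/4)" unfolding s_def by (simp add: algebra_simps)
  have tt: "t * t = D * D/(16 * c * c)" unfolding t_def by (simp add: field_simps)
  have Dd: "D - (a+d) * (a+d) = -4 * (a * d-b * c)" unfolding D_def by (simp add: algebra_simps power2_eq_square)
  have st: "s * s + t * t = r * r"
  proof -
    have "s * s + t * t = -D/(4 * c * c) * ((a+d) * (a+d)/4) + D * D/(16 * c * c)" using ss tt vv by simp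
    also have "\<dots> = D * (D - (a+d) * (a+d))/(16 * c * c)" using c by (simp add: field_simps)
    also have "\<dots> = -D/(4 * c * c) * (a * d-b * c)" unfolding Dd using c by (simp add: field_simps)
    finally show ?thesis using rr vv by simp
  qed
  define cs where "cs = s/r"
  define sn where "sn = t/r"
  have css: "cs^2 + sn^2 = 1" unfolding cs_def sn_def using st r0
    by (simp add: power2_eq_square field_simps)
  have sn0: "sn \<noteq> 0" unfolding sn_def using t0 r0 by simp
  have cst: "cs * sqrt (a * d-b * c) = (a+d)/2" unfolding cs_def s_def r_def using v0 det
    by (simp add: field_simps)
  define K where "K = r/v"
  have K0: "K \<noteq> 0" unfolding K_def using r0 v0 by simp
  have k1: "K * (v * cs + u * sn) = s + u * t/v" unfolding K_def cs_def sn_def using r0 v0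
    by (simp add: field_simps)
  have k2: "K * (v * (-sn) + u * cs) = -t + u * (a+d)/2" unfolding K_def cs_def sn_def s_def using r0 v0
    by (simp add: field_simps)
  have k3: "K * sn = t/v" unfolding K_def sn_def using r0 v0 by (simp add: field_simps)
  have k4: "K * cs = (a+d)/2" unfolding K_def cs_def s_def using r0 v0 by (simp add: field_simps)
  have E3: "c * v = K * sn"
  proof -
    have "c * (v * v) = t" unfolding vv t_def using c by (simp add: field_simps)
    then show ?thesis unfolding k3 using v0 by (simp add: field_simps)
  qed
  have E4: "c * u + d = K * cs" unfolding k4 u_def using c by (simp add: field_simps)
  have E1: "a * v = K * (v * cs + u * sn)"
  proof -
    have "(v * v) * (a-d)/2 = u * t" unfolding vv u_def t_def using c by (simp add: field_simps)
    then have "a * (v * v) = s * v + u * t" unfolding s_def by (simp add: algebra_simps)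
    then show ?thesis unfolding k1 using v0 by (simp add: field_simps)
  qed
  have E2: "a * u + b = K * (v * (-sn) + u * cs)"
  proof -
    have "u * (a-d)/2 + b + t = 0" unfolding u_def t_def D_def using c
      by (simp add: field_simps power2_eq_square)
    then show ?thesis unfolding k2 by (simp add: algebra_simps) argo
  qed
  have gl: "is_lft (lft v u 0 1)" unfolding is_lft_def using v0 by force
  have detg: "v * 1 - u * 0 \<noteq> 0" using v0 by simp
  have detr: "cs * cs - (-sn) * sn \<noteq> 0" using css by (simp add: power2_eq_square)
  have "lft a b c d (lft v u 0 1 x) = lft v u 0 1 (lft cs (-sn) sn cs x)" for x
  proof -
    have "lft a b c d (lft v u 0 1 x) = lft (a * v) (a * u+b) (c * v) (c * u+d) x"
      using det detg by (subst lft_comp) simp_all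
    also have "\<dots> = lft (K * (v * cs + u * sn)) (K * (v * (-sn) + u * cs)) (K * sn) (K * cs) x"
      using E1 E2 E3 E4 by simp
    also have "\<dots> = lft (v * cs + u * sn) (v * (-sn) + u * cs) sn cs x"
      using lft_scale[OF K0] by simp
    also have "\<dots> = lft v u 0 1 (lft cs (-sn) sn cs x)"
      using detg detr by (subst lft_comp) simp_all
    finally show ?thesis .
  qed
  then show ?thesis using gl css sn0 cst by blast
qed



lemma sig_rot: "sig (rot s x) = rot (-s) (sig x)"
proof -
  obtain t where "x = ang t" using ang_surj by blast
  then show ?thesis by (simp add: ang_rot sig_ang algebra_simps)
qed

lemma is_lft_inj: "is_lft g \<Longrightarrow> inj g"
  using is_lft_inv by (metis injI)

lemma real_part:
  assumes cont: "continuous_map rbar_top rbar_top h" and inj: "inj h" and hi: "h Infty = Infty"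
  shows "\<exists>k. (\<forall>x. h (Fin x) = Fin (k x)) \<and> (strict_mono k \<or> strict_antimono_on UNIV k)"
proof -
  define k where "k x = (case h (Fin x) of Fin y \<Rightarrow> y | Infty \<Rightarrow> 0)" for x
  have hk: "h (Fin x) = Fin (k x)" for x
  proof (cases "h (Fin x)")
    case Infty
    then have "h (Fin x) = h Infty" using hi by simp
    then show ?thesis using inj by (simp add: inj_eq)
  qed (simp add: k_def)
  have kc: "continuous_on UNIV k"
    unfolding continuous_on_open_vimage[OF open_UNIV]
  proof (intro allI impI)
    fix B :: "real set" assume oB: "open B"
    have "rbar_open (Fin ` B)" unfolding rbar_open_def
    proof
      have "{x. Fin x \<in> Fin ` B} = B" by auto
      then show "open {x. Fin x \<in> Fin ` B}" using oB by simp
    qed auto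
    then have "rbar_open {x \<in> UNIV. h x \<in> Fin ` B}"
      using cont unfolding continuous_map topspace_rbar openin_rbar by blast
    then have "open {t. Fin t \<in> {x \<in> UNIV. h x \<in> Fin ` B}}" unfolding rbar_open_def by blast
    moreover have "{t. Fin t \<in> {x \<in> UNIV. h x \<in> Fin ` B}} = k -` B \<inter> UNIV"
      by (auto simp: hk)
    ultimately show "open (k -` B \<inter> UNIV)" by simp
  qed
  have "inj k"
  proof (rule injI)
    fix x y assume "k x = k y"
    then have "h (Fin x) = h (Fin y)" by (simp add: hk)
    then show "x = y" using inj by (simp add: inj_eq)
  qed
  then have "strict_mono_on UNIV k \<or> strict_antimono_on UNIV k"
    using injective_eq_monotone_map[of UNIV k] kc by simp
  then show ?thesis using hk by blast
qed

theorem theorem12p6: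
  fixes P1 Q1 :: "real^2^2" and \<alpha> :: real and f :: "rbar \<Rightarrow> rbar"
  assumes "invertible P1" and "invertible Q1"
    and "complex_eigenvalue P1 (Complex (cos \<alpha>) (sin \<alpha>))"
    and "complex_eigenvalue P1 (Complex (cos \<alpha>) (- sin \<alpha>))"
    and "- (pi / 2) < \<alpha>" and "\<alpha> \<le> pi / 2"
    and "\<alpha> / pi \<notin> \<rat>"
    and "homeomorphic_map rbar_top rbar_top f"
    and "\<forall>x. f (mat_act P1 x) = mat_act Q1 (f x)"
  shows "\<exists>a b c d :: real. a * d - b * c \<noteq> 0 \<and> (\<forall>x. f x = lft a b c d x)"
proof -
  note irr = assms(7) and hom = assms(8) and fc = assms(9)
  define T where "T = mat_act P1"
  define U where "U = mat_act Q1"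
  have sa: "sin \<alpha> \<noteq> 0"
  proof
    assume "sin \<alpha> = 0"
    then obtain i :: int where "\<alpha> = i * pi" using sin_zero_iff_int2 by metis
    then have "\<alpha>/pi = of_int i" by simp
    then show False using irr by (metis Rats_of_int)
  qed
  note tr = eigen_trace_det(1)[OF assms(3) sa] and dt = eigen_trace_det(2)[OF assms(3) sa]
  have Tdef: "T = lft (P1$1$1) (P1$1$2) (P1$2$1) (P1$2$2)" unfolding T_def mat_act_def ..
  have DP: "(P1$2$2 - P1$1$1)^2 + 4 * P1$1$2 * P1$2$1 < 0"
  proof -
    have "(P1$2$2 - P1$1$1)^2 + 4 * P1$1$2 * P1$2$1 =
        (P1$1$1 + P1$2$2)^2 - 4 * (P1$1$1 * P1$2$2 - P1$1$2 * P1$2$1)" by algebra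
    also have "\<dots> = 4 * (cos \<alpha>)^2 - 4" using tr dt by (simp add: power2_eq_square)
    also have "\<dots> = - 4 * (sin \<alpha>)^2" using sin_cos_squared_add[of \<alpha>] by argo
    finally show ?thesis using sa by simp
  qed
  obtain A cs sn where A: "is_lft A" "cs^2 + sn^2 = 1" "sn \<noteq> 0"
     "cs * sqrt (P1$1$1 * P1$2$2 - P1$1$2 * P1$2$1) = (P1$1$1 + P1$2$2)/2"
     "\<forall>x. lft (P1$1$1) (P1$1$2) (P1$2$1) (P1$2$2) (A x) = A (lft cs (-sn) sn cs x)"
    using ell[OF DP] by blast
  have csa: "cs = cos \<alpha>" using A(4) dt tr by simp
  have "(cos \<alpha>)^2 + sn^2 = 1" using A(2) csa by simp
  then have "sn^2 = (sin \<alpha>)^2" using sin_cos_squared_add[of \<alpha>] by argo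
  then have "sn = sin \<alpha> \<or> sn = - sin \<alpha>" by (simp add: power2_eq_iff)
  then obtain \<beta> where \<beta>: "lft cs (-sn) sn cs = rot \<beta>" "\<beta>/pi \<notin> \<rat>" "sin \<beta> \<noteq> 0"
  proof
    assume "sn = sin \<alpha>"
    then show thesis using that[of \<alpha>] csa irr sa by (simp add: rot_def)
  next
    assume sn: "sn = - sin \<alpha>"
    have "(-\<alpha>)/pi \<notin> \<rat>" using irr by (metis Rats_minus_iff minus_divide_left)
    then show thesis using that[of "-\<alpha>"] csa sn sa by (simp add: rot_def)
  qed
  obtain \<theta> m where th: "0 < \<theta>" "\<theta> < pi" "rot \<theta> = rot \<beta>" "\<theta> = \<beta> + of_int m * pi"
    using rot_norm[OF \<beta>(3)] by blast
  have thirr: "\<theta>/pi \<notin> \<rat>"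
  proof
    assume "\<theta>/pi \<in> \<rat>"
    moreover have "\<beta>/pi = \<theta>/pi - of_int m" using th(4) by (simp add: field_simps)
    ultimately have "\<beta>/pi \<in> \<rat>" by (simp add: Rats_diff)
    then show False using \<beta>(2) by simp
  qed
  have TA: "T (A x) = A (rot \<theta> x)" for x
    using A(5) \<beta>(1) th(3) Tdef by simp
  have inj_f: "inj f" using homeomorphic_imp_injective_map[OF hom] by (simp add: topspace_rbar)
  have surj_f: "surj f" using homeomorphic_imp_surjective_map[OF hom] by (simp add: topspace_rbar)
  have cont_f: "continuous_map rbar_top rbar_top f" using homeomorphic_imp_continuous_map[OF hom] .
  have Udef: "U = lft (Q1$1$1) (Q1$1$2) (Q1$2$1) (Q1$2$2)" unfolding U_def mat_act_def ..
  have detQ: "Q1$1$1 * Q1$2$2 - Q1$1$2 * Q1$2$1 \<noteq> 0"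
    using assms(2) invertible_det_nz det_2 by metis
  have DQ: "(Q1$2$2 - Q1$1$1)^2 + 4 * Q1$1$2 * Q1$2$1 < 0"
  proof (rule ccontr)
    assume "\<not> ?thesis"
    then obtain y where "U y = y" using lft_fix[OF detQ] Udef by force
    moreover obtain x where "y = f x" using surj_f by (metis surjD)
    ultimately have "f (T x) = f x" using fc unfolding T_def U_def by simp
    then have "T x = x" using inj_f by (simp add: inj_eq)
    then show False using lft_nofix[OF DP] Tdef by simp
  qed
  obtain B cs' sn' where B: "is_lft B" "cs'^2 + sn'^2 = 1" "sn' \<noteq> 0"
     "\<forall>x. lft (Q1$1$1) (Q1$1$2) (Q1$2$1) (Q1$2$2) (B x) = B (lft cs' (-sn') sn' cs' x)"
    using ell[OF DQ] by blast
  obtain \<psi>0 where "cs' = cos \<psi>0" "sn' = sin \<psi>0" using sincos_total_2pi[OF B(2)] by blast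
  then have ps0: "lft cs' (-sn') sn' cs' = rot \<psi>0" "sin \<psi>0 \<noteq> 0" using B(3) by (simp_all add: rot_def)
  obtain \<psi> where ps: "0 < \<psi>" "\<psi> < pi" "rot \<psi> = rot \<psi>0"
    using rot_norm[OF ps0(2)] by blast
  have UB: "U (B x) = B (rot \<psi> x)" for x using B(4) ps0(1) ps(3) Udef by simp
  obtain Binv where Bi: "is_lft Binv" "\<forall>x. Binv (B x) = x" "\<forall>x. B (Binv x) = x"
    using is_lft_inv[OF B(1)] by blast
  obtain Ainv where Ai: "is_lft Ainv" "\<forall>x. Ainv (A x) = x" "\<forall>x. A (Ainv x) = x"
    using is_lft_inv[OF A(1)] by blast
  define h0 where "h0 = Binv \<circ> f \<circ> A"
  have comm0: "h0 (rot \<theta> x) = rot \<psi> (h0 x)" for x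
  proof -
    have "h0 (rot \<theta> x) = Binv (f (T (A x)))" unfolding h0_def by (simp add: TA)
    also have "\<dots> = Binv (U (f (A x)))" using fc unfolding T_def U_def by simp
    also have "\<dots> = Binv (U (B (Binv (f (A x)))))" using Bi(3) by simp
    also have "\<dots> = rot \<psi> (h0 x)" unfolding h0_def using UB Bi(2) by simp
    finally show ?thesis .
  qed
  obtain \<gamma> where ga: "h0 Infty = ang \<gamma>" using ang_surj by blast
  define h1 where "h1 = rot (-\<gamma>) \<circ> h0"
  have h1i: "h1 Infty = Infty"
  proof -
    have "h1 Infty = ang (\<gamma> + - \<gamma>)" unfolding h1_def using ga by (simp only: comp_apply ang_rot)
    also have "\<dots> = Infty" by (simp add: ang_def proj_def)
    finally show ?thesis .
  qed
  have comm1: "h1 (rot \<theta> x) = rot \<psi> (h1 x)" for x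
    unfolding h1_def using comm0 by (simp add: rot_add add.commute)
  have cont1: "continuous_map rbar_top rbar_top h1"
  proof -
    have cA: "continuous_map rbar_top rbar_top A" using is_lft_cont A(1) by blast
    have cB: "continuous_map rbar_top rbar_top Binv" using is_lft_cont Bi(1) by blast
    have cR: "continuous_map rbar_top rbar_top (rot (-\<gamma>))" using is_lft_cont is_lft_rot by blast
    have "continuous_map rbar_top rbar_top h0"
      unfolding h0_def by (rule continuous_map_compose[OF cA continuous_map_compose[OF cont_f cB]])
    then show ?thesis unfolding h1_def by (rule continuous_map_compose[OF _ cR])
  qed
  have inj1: "inj h1" unfolding h1_def h0_def
    by (intro inj_compose is_lft_inj is_lft_rot Bi(1) A(1) inj_f)
  obtain k where k: "\<forall>x. h1 (Fin x) = Fin (k x)" "strict_mono k \<or> strict_antimono_on UNIV k"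
    using real_part[OF cont1 inj1 h1i] by blast
  obtain E where E: "is_lft E" "\<forall>x. E (h1 x) = x"
  proof (cases "strict_mono k")
    case True
    have "h1 x = x" for x
      by (rule core[of h1 k \<theta> \<psi>]) (use h1i k True th thirr ps comm1 in auto)
    then show thesis using that[of id] is_lft_id by simp
  next
    case False
    then have anti: "strict_antimono_on UNIV k" using k(2) by simp
    have mk: "strict_mono (\<lambda>x. - k x)"
      using anti by (auto simp: monotone_on_def)
    have s0: "sin (-\<psi>) \<noteq> 0" using sin_gt_zero[OF ps(1) ps(2)] by simp
    obtain \<psi>2 where ps2: "0 < \<psi>2" "\<psi>2 < pi" "rot \<psi>2 = rot (-\<psi>)"
      using rot_norm[OF s0] by blast
    have "(sig \<circ> h1) x = x" for x
    proof (rule core[of "sig \<circ> h1" "\<lambda>x. - k x" \<theta> \<psi>2])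
      show "(sig \<circ> h1) Infty = Infty" using h1i by (simp add: sig_Fin)
      show "(sig \<circ> h1) (Fin y) = Fin (- k y)" for y using k(1) by (simp add: sig_Fin)
      show "(sig \<circ> h1) (rot \<theta> y) = rot \<psi>2 ((sig \<circ> h1) y)" for y
        using comm1 ps2(3) by (simp add: sig_rot)
    qed (use mk th thirr ps2 in auto)
    then show thesis using that[of sig] is_lft_sig by simp
  qed
  define W where "W = E \<circ> rot (-\<gamma>) \<circ> Binv"
  have W: "is_lft W" unfolding W_def by (intro is_lft_comp E(1) is_lft_rot Bi(1))
  have WfA: "W (f (A z)) = z" for z using E(2) unfolding W_def h1_def h0_def by simp
  obtain Winv where Wi: "is_lft Winv" "\<forall>x. Winv (W x) = x"
    using is_lft_inv[OF W] by blast
  have fA: "f (A z) = Winv z" for z using Wi(2) WfA by metis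
  have G: "is_lft (Winv \<circ> Ainv)" by (intro is_lft_comp Wi(1) Ai(1))
  have "f x = (Winv \<circ> Ainv) x" for x using fA[of "Ainv x"] Ai(3) by simp
  then show ?thesis using G unfolding is_lft_def by metis
qed


end
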